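(* Let $k\ge3$ be an integer, $c>1$ fixed, $\delta=1/c$, $\mathcal N$ a positive integer with $\mathcal N^{1/k}>2$, $\mathcal L=\log \mathcal N^{1/k}$, and $\kappa>0$ fixed. Define $$\mathcal J(z)=\int_2^{\mathcal N^{1/k}} \frac{\delta x^{\delta-1} e(zx^k)}{\log x}\,dx,\qquad \mathcal I(z)=\int_0^{\mathcal N^{1/k}} \delta x^{\delta-1}e(zx^k)\,dx.$$ Then for any nonzero $\beta \in \mathbb R$, $$\mathcal J (\beta) - \mathcal L^{-1} \mathcal I (\beta) \ll \frac{\mathcal N^{\delta/k}}{\mathcal L^{\kappa+2} } + \min\{ \mathcal N^{\delta/k}, |\beta |^{-\delta/k}\}\frac{\log \log \mathcal N}{\mathcal L^2}.$$
   Context: $e(x)=e^{2\pi i x}$. Implied constants may depend on $c,k,\kappa$. *)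

theory Defs
  imports "HOL-Analysis.Analysis"
begin

definition e :: "real \<Rightarrow> complex" where
  "e x = exp (2 * pi * \<i> * complex_of_real x)"

definition calJ :: "real \<Rightarrow> nat \<Rightarrow> nat \<Rightarrow> real \<Rightarrow> complex" where
  "calJ c k N z = integral {2 .. real N powr (1 / real k)}
     (\<lambda>x. complex_of_real ((1/c) * x powr (1/c - 1) / ln x) * e (z * x ^ k))"

text \<open>I(z) = integral over [0, N^(1/k)] of delta x^(delta-1) e(z x^k) (absolutely convergent
  improper integral at 0; Henstock-Kurzweil integral)\<close>
definition calI :: "real \<Rightarrow> nat \<Rightarrow> nat \<Rightarrow> real \<Rightarrow> complex" where
  "calI c k N z = integral {0 .. real N powr (1 / real k)}
     (\<lambda>x. complex_of_real ((1/c) * x powr (1/c - 1)) * e (z * x ^ k))"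

end

theory Submission imports Defs begin

lemma norm_e [simp]: "norm (e y) = 1"
  unfolding e_def by (simp add: norm_exp_eq_Re)

lemma cont_e: "continuous_on S (\<lambda>x. e (b * x ^ k))"
  unfolding e_def by (intro continuous_intros)

lemma e_deriv:
  assumes "\<beta> \<noteq> 0" "k \<ge> 1"
  shows "((\<lambda>x. e (\<beta> * x ^ k) / (2 * pi * \<i> * \<beta> * k)) has_vector_derivative
          (of_real (x ^ (k - 1)) * e (\<beta> * x ^ k))) (at x within S)"
proof -
  have "((\<lambda>z. exp (2 * pi * \<i> * (of_real \<beta> * z ^ k)) / (2 * pi * \<i> * \<beta> * k)) has_field_derivative
          (of_real x ^ (k - 1) * exp (2 * pi * \<i> * (of_real \<beta> * (of_real x) ^ k)))) (at (of_real x))"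
    using assms
    by (auto intro!: derivative_eq_intros)
  from has_vector_derivative_real_field[OF this, of S] show ?thesis
    unfolding e_def by simp
qed

lemma osc:
  fixes G G' :: "real \<Rightarrow> real"
  assumes uv: "0 < u" "u \<le> v" and b: "\<beta> \<noteq> 0" and k: "k \<ge> 1"
    and Gd: "\<And>x. x \<in> {u..v} \<Longrightarrow> (G has_real_derivative G' x) (at x within {u..v})"
    and Gc: "continuous_on {u..v} G"
    and G0: "\<And>x. x \<in> {u..v} \<Longrightarrow> G x \<ge> 0"
    and G'0: "\<And>x. x \<in> {u..v} \<Longrightarrow> G' x \<le> 0"
  shows "norm (integral {u..v} (\<lambda>x. complex_of_real (G x * x ^ (k - 1)) * e (\<beta> * x ^ k)))
           \<le> G u / (pi * k * \<bar>\<beta>\<bar>)"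
proof -
  define c where "c = 2 * pi * \<i> * \<beta> * k"
  define E where "E = (\<lambda>x. e (\<beta> * x ^ k) / c)"
  define T where "T = (\<lambda>x. complex_of_real (G x * x ^ (k - 1)) * e (\<beta> * x ^ k))"
  have nc: "norm c = 2 * pi * k * \<bar>\<beta>\<bar>" unfolding c_def using k
    by (simp add: norm_mult)
  have cpos: "2 * pi * k * \<bar>\<beta>\<bar> > 0" using b k by auto
  have nE: "norm (E x) = 1 / (2 * pi * k * \<bar>\<beta>\<bar>)" for x
    unfolding E_def using nc by (simp add: norm_divide)
  have Ed: "(E has_vector_derivative (of_real (x ^ (k - 1)) * e (\<beta> * x ^ k))) (at x within S)" for x S
    unfolding E_def c_def using e_deriv[OF b k] by simp
  have Hd: "((\<lambda>x. of_real (G x) * E x) has_vector_derivative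
           (of_real (G' x) * E x + T x)) (at x within {u..v})" if "x \<in> {u..v}" for x
    using has_vector_derivative_mult[OF has_vector_derivative_of_real[OF Gd[OF that]] Ed[of x "{u..v}"]]
    unfolding T_def by (simp add: algebra_simps)
  have H: "((\<lambda>x. of_real (G' x) * E x + T x) has_integral
             (of_real (G v) * E v - of_real (G u) * E u)) {u..v}"
    by (rule fundamental_theorem_of_calculus[OF uv(2)]) (use Hd in auto)
  have Tc: "continuous_on {u..v} T" unfolding T_def e_def
    by (intro continuous_intros Gc)
  have Ti: "T integrable_on {u..v}" by (rule integrable_continuous_real[OF Tc])
  have GE: "((\<lambda>x. of_real (G' x) * E x) has_integral
       (of_real (G v) * E v - of_real (G u) * E u) - integral {u..v} T) {u..v}"
    using has_integral_diff[OF H integrable_integral[OF Ti]] by simp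
  have G'i: "(G' has_integral (G v - G u)) {u..v}"
    by (rule fundamental_theorem_of_calculus[OF uv(2)])
       (use Gd in \<open>auto simp: has_real_derivative_iff_has_vector_derivative\<close>)
  have nGE: "norm (integral {u..v} (\<lambda>x. of_real (G' x) * E x))
      \<le> integral {u..v} (\<lambda>x. - G' x / (2 * pi * k * \<bar>\<beta>\<bar>))"
  proof (rule integral_norm_bound_integral)
    show "(\<lambda>x. of_real (G' x) * E x) integrable_on {u..v}" using GE by blast
    show "(\<lambda>x. - G' x / (2 * pi * k * \<bar>\<beta>\<bar>)) integrable_on {u..v}"
      using has_integral_divide[OF has_integral_neg[OF G'i], of "2 * pi * k * \<bar>\<beta>\<bar>"] by blast
    fix x assume "x \<in> {u..v}"
    then show "norm (of_real (G' x) * E x) \<le> - G' x / (2 * pi * k * \<bar>\<beta>\<bar>)"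
      using G'0 by (simp add: norm_mult nE)
  qed
  also have "\<dots> = (G u - G v) / (2 * pi * k * \<bar>\<beta>\<bar>)"
    using integral_unique[OF G'i] by (simp add: integral_divide integral_neg diff_divide_distrib)
  finally have nGE': "norm (integral {u..v} (\<lambda>x. of_real (G' x) * E x)) \<le> (G u - G v) / (2 * pi * k * \<bar>\<beta>\<bar>)" .
  have eqT: "integral {u..v} T = (of_real (G v) * E v - of_real (G u) * E u) - integral {u..v} (\<lambda>x. of_real (G' x) * E x)"
    using integral_unique[OF GE] by simp
  have "norm (integral {u..v} T) \<le> norm (of_real (G v) * E v) + norm (of_real (G u) * E u)
      + norm (integral {u..v} (\<lambda>x. of_real (G' x) * E x))"
    unfolding eqT by (rule order_trans[OF norm_triangle_ineq4 add_mono[OF norm_triangle_ineq4 order_refl]])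
  also have "\<dots> \<le> G v / (2 * pi * k * \<bar>\<beta>\<bar>) + G u / (2 * pi * k * \<bar>\<beta>\<bar>)
      + (G u - G v) / (2 * pi * k * \<bar>\<beta>\<bar>)"
    using nGE' G0[of u] G0[of v] uv by (simp add: norm_mult nE)
  also have "\<dots> = G u / (pi * k * \<bar>\<beta>\<bar>)"
  proof -
    have "pi * k * \<bar>\<beta>\<bar> \<noteq> 0" using b k by simp
    then show ?thesis using b k by (simp add: field_simps)
  qed
  finally show ?thesis unfolding T_def .
qed
lemma powr_int:
  fixes u v d :: real
  assumes "0 < u" "u \<le> v" "d > 0"
  shows "((\<lambda>x. d * x powr (d - 1)) has_integral (v powr d - u powr d)) {u..v}"
proof -
  have "((\<lambda>x. x powr d) has_vector_derivative (d * x powr (d - 1))) (at x within {u..v})"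
    if "x \<in> {u..v}" for x
  proof -
    have "x > 0" using that assms by auto
    then have "((\<lambda>x. x powr d) has_real_derivative (d * x powr (d - 1))) (at x within {u..v})"
      by (auto intro!: derivative_eq_intros)
    then show ?thesis by (simp add: has_real_derivative_iff_has_vector_derivative)
  qed
  then show ?thesis by (intro fundamental_theorem_of_calculus) (use assms in auto)
qed

lemma triv_bound:
  fixes h :: "real \<Rightarrow> complex"
  assumes "0 < u" "u \<le> v" "d > 0" "continuous_on {u..v} h"
    and "\<And>x. x \<in> {u..v} \<Longrightarrow> norm (h x) \<le> M * (d * x powr (d - 1))"
  shows "norm (integral {u..v} h) \<le> M * (v powr d - u powr d)"
proof -
  have i: "((\<lambda>x. M * (d * x powr (d - 1))) has_integral M * (v powr d - u powr d)) {u..v}"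
    by (rule has_integral_mult_right[OF powr_int[OF assms(1-3)]])
  have "norm (integral {u..v} h) \<le> integral {u..v} (\<lambda>x. M * (d * x powr (d - 1)))"
    by (rule integral_norm_bound_integral) 
       (use i assms integrable_continuous_real in auto)
  then show ?thesis using integral_unique[OF i] by (simp del: integral_mult_right)
qed

lemma I_integrable:
  fixes d X :: real
  assumes "d > 0" "d < 1" "X \<ge> 0"
  shows "(\<lambda>x. complex_of_real (d * x powr (d - 1)) * e (\<beta> * x ^ k)) integrable_on {0..X}"
    and "((\<lambda>x. d * x powr (d - 1)) has_integral X powr d) {0..X}"
proof -
  have "((\<lambda>x. x powr (d - 1)) has_integral (X powr (d - 1 + 1) / (d - 1 + 1))) {0..X}"
    by (rule has_integral_powr_from_0) (use assms in auto)
  from has_integral_mult_right[OF this, of d]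
  show p: "((\<lambda>x. d * x powr (d - 1)) has_integral X powr d) {0..X}"
    using assms by simp
  have "(\<lambda>x. d * x powr (d - 1)) absolutely_integrable_on {0..X}"
    by (rule nonnegative_absolutely_integrable_1) (use p assms in auto)
  from absolutely_integrable_linear[OF this bounded_linear_of_real]
  have a: "(\<lambda>x. complex_of_real (d * x powr (d - 1))) absolutely_integrable_on {0..X}"
    by (simp add: o_def)
  have "(\<lambda>x. e (\<beta> * x ^ k) * complex_of_real (d * x powr (d - 1))) absolutely_integrable_on {0..X}"
  proof (rule absolutely_integrable_bounded_measurable_product[OF bilinear_times _ _ _ a])
    show "(\<lambda>x. e (\<beta> * x ^ k)) \<in> borel_measurable (lebesgue_on {0..X})"
      by (rule continuous_imp_measurable_on_sets_lebesgue[OF cont_e]) auto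
    show "{0..X} \<in> sets lebesgue" by simp
    show "bounded ((\<lambda>x. e (\<beta> * x ^ k)) ` {0..X})"
      by (auto simp: bounded_iff intro!: exI[of _ 1])
  qed
  then show "(\<lambda>x. complex_of_real (d * x powr (d - 1)) * e (\<beta> * x ^ k)) integrable_on {0..X}"
    by (simp add: absolutely_integrable_on_def mult.commute)
qed
lemma I_bound:
  fixes d Z :: real
  assumes "d > 0" "d < 1" "Z \<ge> 0"
  shows "norm (integral {0..Z} (\<lambda>x. complex_of_real (d * x powr (d - 1)) * e (\<beta> * x ^ k))) \<le> Z powr d"
proof -
  note I = I_integrable[OF assms]
  have "norm (integral {0..Z} (\<lambda>x. complex_of_real (d * x powr (d - 1)) * e (\<beta> * x ^ k)))
     \<le> integral {0..Z} (\<lambda>x. d * x powr (d - 1))"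
    by (rule integral_norm_bound_integral) (use I assms in \<open>auto simp: norm_mult\<close>)
  then show ?thesis using integral_unique[OF I(2)] by simp
qed

lemma G_deriv:
  fixes x d L :: real
  assumes "x > 1"
  shows "((\<lambda>x. d * x powr (d - real k) * (1 / ln x - 1 / L)) has_real_derivative
     ((d - real k) * x powr (d - real k - 1) * d * (1 / ln x - 1 / L)
      + (- (1 / x) / (ln x * ln x)) * (d * x powr (d - real k)))) (at x within S)"
  using assms by (auto intro!: derivative_eq_intros)

theorem lemma6:
  fixes k :: nat and c \<kappa> :: real
  assumes "k \<ge> 3" and "c > 1" and "\<kappa> > 0"
  shows "\<exists>C>0. \<forall>N::nat. \<forall>\<beta>::real.
    N > 0 \<longrightarrow> real N powr (1 / real k) > 2 \<longrightarrow> \<beta> \<noteq> 0 \<longrightarrow>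
    cmod (calJ c k N \<beta> - complex_of_real (1 / ln (real N powr (1 / real k))) * calI c k N \<beta>)
      \<le> C * (real N powr ((1/c) / real k) / ln (real N powr (1 / real k)) powr (\<kappa> + 2)
             + min (real N powr ((1/c) / real k)) (\<bar>\<beta>\<bar> powr (- (1/c) / real k))
               * ln (ln (real N)) / (ln (real N powr (1 / real k)))\<^sup>2)"
proof -
  define d where "d = 1 / c"
  have d0: "d > 0" "d < 1" using assms by (auto simp: d_def)
  define A where "A = (\<kappa> + 2) * c"
  have A2: "A > 2"
  proof -
    have "(\<kappa> + 2) * c > (\<kappa> + 2) * 1" using assms by (intro mult_strict_left_mono) auto
    then have "(\<kappa> + 2) * c > \<kappa> + 2" by simp
    then show ?thesis using assms unfolding A_def by linarith
  qed
  have Ad: "A * d = \<kappa> + 2" using assms by (simp add: A_def d_def)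
  define L1 where "L1 = 2 + 4 * A * ln (4 * A)"
  have lnA: "ln (4 * A) > 0" using A2 by simp
  have L1_2: "L1 \<ge> 2" using lnA A2 by (simp add: L1_def)
  define C where "C = 3 * L1 powr (\<kappa> + 2) + 3 + 4 * A"
  have C3: "C \<ge> 3" "C \<ge> 4 * A" "C \<ge> 3 * L1 powr (\<kappa> + 2)"
    using A2 by (auto simp: C_def)
  have k1: "k \<ge> 1" "real k \<ge> 1" using assms by auto
  show ?thesis
  proof (intro exI[of _ C] conjI allI impI)
    show "C > 0" using C3 A2 by linarith
    fix N :: nat and \<beta> :: real
    assume N0: "N > 0" and X2: "real N powr (1 / real k) > 2" and b0: "\<beta> \<noteq> 0"
    define X where "X = real N powr (1 / real k)"
    define L where "L = ln X"
    define Y where "Y = \<bar>\<beta>\<bar> powr (- 1 / real k)"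
    have X2': "X > 2" using X2 by (simp add: X_def)
    have L0: "L > ln 2" "L > 0" using X2' by (auto simp: L_def)
    have lnN: "ln (real N) = real k * L"
      using N0 k1 by (simp add: L_def X_def ln_powr)
    have XP: "real N powr ((1/c) / real k) = X powr d"
      by (simp add: X_def d_def powr_powr mult.commute)
    have Y0: "Y > 0" using b0 by (simp add: Y_def)
    have YP: "\<bar>\<beta>\<bar> powr (- (1/c) / real k) = Y powr d"
      by (simp add: Y_def d_def powr_powr mult.commute)
    have Yk: "Y powr (d - real k) = Y powr d * \<bar>\<beta>\<bar>"
    proof -
      have "Y powr (- real k) = \<bar>\<beta>\<bar>" using k1 b0 by (simp add: Y_def powr_powr)
      then show ?thesis by (simp add: powr_diff powr_minus divide_inverse)
    qed
    have lnkL: "ln (real k * L) \<ge> 0"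
    proof -
      have "real k * L \<ge> 3 * ln 2" using L0 assms by (intro mult_mono) auto
      moreover have "3 * ln (2::real) \<ge> 1" using ln2_ge_two_thirds by simp
      ultimately show ?thesis by simp
    qed
    have ln2i: "1 / ln (2::real) \<le> 3 / 2" using ln2_ge_two_thirds by (simp add: field_simps)
    define \<phi> where "\<phi> = (\<lambda>x::real. e (\<beta> * x ^ k))"
    define fI where "fI = (\<lambda>x. complex_of_real (d * x powr (d - 1)) * \<phi> x)"
    define fJ where "fJ = (\<lambda>x. complex_of_real (d * x powr (d - 1) / ln x) * \<phi> x)"
    define fD where "fD = (\<lambda>x. complex_of_real (d * x powr (d - 1) * (1 / ln x - 1 / L)) * \<phi> x)"
    have Jdef: "calJ c k N \<beta> = integral {2..X} fJ"
      by (simp add: calJ_def fJ_def \<phi>_def d_def X_def)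
    have Idef: "calI c k N \<beta> = integral {0..X} fI"
      by (simp add: calI_def fI_def \<phi>_def d_def X_def)
    have fIi: "fI integrable_on {0..X}"
      unfolding fI_def \<phi>_def by (rule I_integrable) (use d0 X2' in auto)
    have Isplit: "integral {0..X} fI = integral {0..2} fI + integral {2..X} fI"
      using Henstock_Kurzweil_Integration.integral_combine[where a=0 and c=2 and b=X and f=fI] fIi X2' by simp
    have contD: "continuous_on {u..v} fD" if "u \<ge> 2" for u v
      unfolding fD_def \<phi>_def e_def using that by (intro continuous_intros) auto
    have contJ: "continuous_on {2..X} fJ"
      unfolding fJ_def \<phi>_def e_def by (intro continuous_intros) auto
    have contI: "continuous_on {2..X} fI"
      unfolding fI_def \<phi>_def e_def by (intro continuous_intros) auto
    have Dint: "integral {2..X} fJ - complex_of_real (1 / L) * integral {2..X} fI = integral {2..X} fD"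
    proof -
      have "integral {2..X} fJ - complex_of_real (1 / L) * integral {2..X} fI
          = integral {2..X} (\<lambda>x. fJ x - complex_of_real (1 / L) * fI x)"
      proof -
        have iJ: "fJ integrable_on {2..X}" by (rule integrable_continuous_real[OF contJ])
        have iI: "(\<lambda>x. complex_of_real (1 / L) * fI x) integrable_on {2..X}"
          by (rule integrable_on_mult_right[OF integrable_continuous_real[OF contI]])
        show ?thesis
          by (simp only: integral_diff[OF iJ iI] integral_mult_right)
      qed
      also have "\<dots> = integral {2..X} fD"
        by (rule integral_cong) (simp add: fJ_def fI_def fD_def algebra_simps)
      finally show ?thesis .
    qed
    define D where "D = calJ c k N \<beta> - complex_of_real (1 / L) * calI c k N \<beta>"
    have Deq: "D = integral {2..X} fD - complex_of_real (1 / L) * integral {0..2} fI"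
      unfolding D_def Jdef Idef Isplit using Dint by (simp add: algebra_simps)
    have I2: "norm (integral {0..2} fI) \<le> 2 powr d"
      unfolding fI_def \<phi>_def by (rule I_bound) (use d0 in auto)
    have Xd0: "X powr d > 0" using X2' by simp
    have main: "norm D \<le> C * (X powr d / L powr (\<kappa> + 2) + min (X powr d) (Y powr d) * ln (real k * L) / L\<^sup>2)"
    proof (cases "L \<le> L1")
      case True
      have nJ: "norm (integral {2..X} fJ) \<le> 3 / 2 * X powr d"
      proof -
        have "norm (integral {2..X} fJ) \<le> (1 / ln 2) * (X powr d - 2 powr d)"
        proof (rule triv_bound[OF _ _ d0(1) contJ])
          fix x assume x: "x \<in> {2..X}"
          then have lx: "ln x \<ge> ln 2" "ln x > 0" by auto
          have "norm (fJ x) = d * x powr (d - 1) / ln x"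
            unfolding fJ_def \<phi>_def norm_mult norm_of_real norm_e using x d0 by simp
          also have "\<dots> \<le> d * x powr (d - 1) / ln 2"
            using lx d0 x by (intro divide_left_mono) auto
          finally show "norm (fJ x) \<le> 1 / ln 2 * (d * x powr (d - 1))" by simp
        qed (use X2' in auto)
        also have "\<dots> \<le> 3 / 2 * X powr d"
          using ln2i d0 X2' by (intro mult_mono) (auto intro: powr_mono2)
        finally show ?thesis .
      qed
      have nI: "norm (integral {0..X} fI) \<le> X powr d"
        unfolding fI_def \<phi>_def by (rule I_bound) (use d0 X2' in auto)
      have "norm D \<le> norm (integral {2..X} fJ) + (1 / L) * norm (integral {0..X} fI)"
        unfolding D_def Jdef Idef using L0
        by (metis (no_types, lifting) abs_of_pos norm_mult norm_of_real norm_triangle_ineq4 zero_less_divide_1_iff)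
      also have "\<dots> \<le> 3 / 2 * X powr d + 3 / 2 * X powr d"
      proof -
        have "1 / L \<le> 1 / ln 2" using L0 by (intro divide_left_mono) auto
        then have "1 / L \<le> 3 / 2" using ln2i by linarith
        then have "(1 / L) * norm (integral {0..X} fI) \<le> 3 / 2 * X powr d"
          using nI L0 by (intro mult_mono) auto
        then show ?thesis using nJ by linarith
      qed
      also have "\<dots> = 3 * X powr d" by simp
      also have "\<dots> \<le> 3 * L1 powr (\<kappa> + 2) * (X powr d / L powr (\<kappa> + 2))"
      proof -
        have "L powr (\<kappa> + 2) \<le> L1 powr (\<kappa> + 2)" using True L0 assms by (intro powr_mono2) auto
        moreover have "L powr (\<kappa> + 2) > 0" using L0 by simp
        ultimately have "X powr d \<le> L1 powr (\<kappa> + 2) * (X powr d / L powr (\<kappa> + 2))"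
          using Xd0 by (simp add: field_simps)
        then show ?thesis by simp
      qed
      also have "\<dots> \<le> C * (X powr d / L powr (\<kappa> + 2))"
        using C3 Xd0 L0 by (intro mult_right_mono) auto
      also have "\<dots> \<le> C * (X powr d / L powr (\<kappa> + 2) + min (X powr d) (Y powr d) * ln (real k * L) / L\<^sup>2)"
        using C3 lnkL Y0 Xd0 by (intro mult_left_mono) auto
      finally show ?thesis .
    next
      case False
      then have LL1: "L > L1" by simp
      have L2: "L \<ge> 2" using LL1 L1_2 by simp
      have lnL0: "ln L \<ge> 0" using L2 by simp
      have AlnL: "A * ln L \<le> L / 2"
      proof -
        have "ln L = ln (4 * A) + ln (L / (4 * A))" using A2 L2 by (simp add: ln_div)
        also have "\<dots> \<le> ln (4 * A) + L / (4 * A)"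
          using ln_le_minus_one[of "L / (4 * A)"] A2 L2 by simp
        finally have "A * ln L \<le> A * ln (4 * A) + L / 4"
          using A2 by (auto simp: field_simps dest: mult_left_mono[of _ _ A])
        then show ?thesis using LL1 unfolding L1_def by linarith
      qed
      define a where "a = X * L powr (- A)"
      have a0: "a > 0" using X2' L2 by (simp add: a_def)
      have lna: "ln a = L - A * ln L"
        using X2' L2 by (simp add: a_def ln_mult ln_powr L_def)
      have lna2: "ln a \<ge> L / 2" using lna AlnL by simp
      have aX: "a \<le> X"
      proof -
        have "L powr (- A) \<le> 1" using L2 A2 by (simp add: powr_minus_divide ge_one_powr_ge_zero)
        then show ?thesis using X2' by (simp add: a_def mult_left_le)
      qed
      have a2: "a \<ge> 2"
      proof -
        have "ln 2 \<le> ln a" using lna2 L2 ln_2_less_1 by linarith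
        then show ?thesis using a0 by simp
      qed
      have ad: "a powr d = X powr d / L powr (\<kappa> + 2)"
      proof -
        have "a powr d = X powr d * (L powr (- A)) powr d"
          using X2' L2 by (simp add: a_def powr_mult)
        also have "(L powr (- A)) powr d = L powr (- (\<kappa> + 2))"
          using Ad by (simp add: powr_powr)
        finally show ?thesis by (simp only: powr_minus divide_inverse)
      qed
      define W where "W = 2 * A * ln (real k * L) / L\<^sup>2"
      have W0: "W \<ge> 0" using A2 lnkL by (simp add: W_def)
      have bnd: "0 \<le> 1 / ln x - 1 / L \<and> 1 / ln x - 1 / L \<le> W" if x: "a \<le> x" "x \<le> X" for x
      proof -
        have la: "ln a \<le> ln x" using x a0 by simp
        have lx1: "ln x \<ge> L / 2" using la lna2 by linarith
        have lx2: "ln x \<le> L" using x a0 by (simp add: L_def)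
        note lx = lx1 lx2
        have lx0: "ln x > 0" using lx L0 by linarith
        have e1: "1 / ln x - 1 / L = (L - ln x) / (L * ln x)" using lx0 L0 by (simp add: field_simps)
        have "L - ln x \<le> A * ln L" using lna la by linarith
        also have "\<dots> \<le> A * ln (real k * L)" using A2 L2 k1 by (intro mult_left_mono) auto
        finally have num: "L - ln x \<le> A * ln (real k * L)" .
        have den: "L * (L / 2) \<le> L * ln x" using lx L0 by (intro mult_left_mono) auto
        have "(L - ln x) / (L * ln x) \<le> A * ln (real k * L) / (L * (L / 2))"
          using num den lx L0 lx0 A2 lnkL by (intro frac_le) auto
        also have "\<dots> = W" by (simp add: W_def power2_eq_square)
        finally show ?thesis using e1 lx lx0 L0 by (simp add: divide_nonneg_nonneg)
      qed
      have fDn: "norm (fD x) = d * x powr (d - 1) * (1 / ln x - 1 / L)" if "a \<le> x" "x \<le> X" for x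
        unfolding fD_def \<phi>_def norm_mult norm_of_real norm_e using bnd[OF that] that a0 d0 by simp
      have trivW: "norm (integral {u..v} fD) \<le> W * (v powr d - u powr d)" if "a \<le> u" "u \<le> v" "v \<le> X" for u v
      proof (rule triv_bound[OF _ that(2) d0(1) contD])
        fix x assume x: "x \<in> {u..v}"
        then have "a \<le> x" "x \<le> X" using that by auto
        then have "d * x powr (d - 1) * (1 / ln x - 1 / L) \<le> d * x powr (d - 1) * W"
          using bnd d0 by (intro mult_left_mono) auto
        then show "norm (fD x) \<le> W * (d * x powr (d - 1))"
          using fDn \<open>a \<le> x\<close> \<open>x \<le> X\<close> by (simp add: mult.commute)
      qed (use that a0 a2 in auto)
      define G where "G = (\<lambda>x. d * x powr (d - real k) * (1 / ln x - 1 / L))"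
      have oscW: "norm (integral {u..X} fD) \<le> W * Y powr d" if u: "a \<le> u" "u \<le> X" "Y \<le> u" for u
      proof -
        have eqD: "integral {u..X} fD = integral {u..X} (\<lambda>x. complex_of_real (G x * x ^ (k - 1)) * e (\<beta> * x ^ k))"
        proof (rule integral_cong)
          fix x assume "x \<in> {u..X}"
          then have x0: "x > 0" using u a0 by auto
          have "x powr (d - 1) = x powr (d - real k) * x ^ (k - 1)"
            using x0 k1 by (simp add: powr_realpow[symmetric] powr_add[symmetric] of_nat_diff)
          then show "fD x = complex_of_real (G x * x ^ (k - 1)) * e (\<beta> * x ^ k)"
            by (simp add: fD_def G_def \<phi>_def)
        qed
        have "norm (integral {u..X} (\<lambda>x. complex_of_real (G x * x ^ (k - 1)) * e (\<beta> * x ^ k)))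
            \<le> G u / (pi * k * \<bar>\<beta>\<bar>)"
        proof (rule osc[OF _ u(2) b0 k1(1)])
          show "0 < u" using u a0 by auto
          fix x assume x: "x \<in> {u..X}"
          then have x1: "x > 1" "a \<le> x" "x \<le> X" using u a2 by auto
          show "(G has_real_derivative ((d - real k) * x powr (d - real k - 1) * d * (1 / ln x - 1 / L)
            + (- (1 / x) / (ln x * ln x)) * (d * x powr (d - real k)))) (at x within {u..X})"
            unfolding G_def by (rule G_deriv[OF x1(1)])
          show "G x \<ge> 0" using bnd[OF x1(2,3)] d0 by (simp add: G_def)
          have t1: "(d - real k) * x powr (d - real k - 1) * d * (1 / ln x - 1 / L) \<le> 0"
            using bnd[OF x1(2,3)] d0 k1
            by (intro mult_nonpos_nonneg) (auto intro!: mult_nonpos_nonneg)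
          have t2: "(- (1 / x) / (ln x * ln x)) * (d * x powr (d - real k)) \<le> 0"
            using x1 d0 by (intro mult_nonpos_nonneg) (auto intro!: divide_nonpos_nonneg)
          show "(d - real k) * x powr (d - real k - 1) * d * (1 / ln x - 1 / L)
            + (- (1 / x) / (ln x * ln x)) * (d * x powr (d - real k)) \<le> 0"
            using t1 t2 by linarith
        next
          show "continuous_on {u..X} G" unfolding G_def using u a2
            by (intro continuous_intros) auto
        qed
        also have "\<dots> \<le> W * Y powr d"
        proof -
          have Gu: "G u \<le> d * u powr (d - real k) * W"
            unfolding G_def using bnd[OF u(1,2)] d0 by (intro mult_left_mono) auto
          have "u powr (d - real k) \<le> Y powr (d - real k)"
            using u Y0 d0 k1 by (intro powr_mono2') auto
          then have m1: "d * u powr (d - real k) * W \<le> 1 * (Y powr d * \<bar>\<beta>\<bar>) * W"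
            using d0 W0 Yk by (intro mult_right_mono mult_mono) auto
          have pk: "pi * k * \<bar>\<beta>\<bar> \<ge> \<bar>\<beta>\<bar>"
          proof -
            have "pi * k \<ge> 1 * 1" using k1 pi_gt3 by (intro mult_mono) auto
            then show ?thesis using mult_right_mono[of 1 "pi * k" "\<bar>\<beta>\<bar>"] by simp
          qed
          have "G u \<le> (Y powr d * W) * \<bar>\<beta>\<bar>" using Gu m1 by (simp add: ac_simps)
          also have "\<dots> \<le> (Y powr d * W) * (pi * k * \<bar>\<beta>\<bar>)"
            using pk W0 Y0 by (intro mult_left_mono) auto
          finally have "G u \<le> W * Y powr d * (pi * k * \<bar>\<beta>\<bar>)" by (simp add: ac_simps)
          moreover have "pi * k * \<bar>\<beta>\<bar> > 0" using b0 k1 by simp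
          ultimately show ?thesis by (simp add: divide_le_eq)
        qed
        finally show ?thesis using eqD by simp
      qed
      have n3: "norm (integral {a..X} fD) \<le> 2 * W * min (X powr d) (Y powr d)"
      proof (cases "Y \<le> a")
        case True
        then have "min (X powr d) (Y powr d) = Y powr d" using aX Y0 d0 by (simp add: powr_mono2)
        moreover have "W * Y powr d \<ge> 0" using W0 by simp
        ultimately show ?thesis using oscW[OF order_refl aX True] by simp
      next
        case Ya: False
        show ?thesis
        proof (cases "Y \<le> X")
          case True
          have m: "min (X powr d) (Y powr d) = Y powr d" using True Y0 d0 by (simp add: powr_mono2)
          have sp: "integral {a..X} fD = integral {a..Y} fD + integral {Y..X} fD"
            using Henstock_Kurzweil_Integration.integral_combine[where a=a and c=Y and b=X and f=fD] Ya True integrable_continuous_real[OF contD[OF a2]] by simp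
          have n1: "norm (integral {a..Y} fD) \<le> W * Y powr d"
          proof -
            have "W * (Y powr d - a powr d) \<le> W * Y powr d" using W0 by (simp add: mult_left_mono)
            then show ?thesis using trivW[of a Y] Ya True by simp
          qed
          have n2: "norm (integral {Y..X} fD) \<le> W * Y powr d"
            using oscW[of Y] Ya True by simp
          show ?thesis unfolding sp m using n1 n2 norm_triangle_ineq[of "integral {a..Y} fD" "integral {Y..X} fD"] by simp
        next
          case False
          have m: "min (X powr d) (Y powr d) = X powr d" using False X2' d0 by (simp add: powr_mono2)
          have "norm (integral {a..X} fD) \<le> W * X powr d"
          proof -
            have "W * (X powr d - a powr d) \<le> W * X powr d" using W0 by (simp add: mult_left_mono)
            then show ?thesis using trivW[of a X] aX by simp
          qed
          moreover have "W * X powr d \<ge> 0" using W0 by simp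
          ultimately show ?thesis unfolding m by simp
        qed
      qed
      have sp2: "integral {2..X} fD = integral {2..a} fD + integral {a..X} fD"
        using Henstock_Kurzweil_Integration.integral_combine[where a=2 and c=a and b=X and f=fD] a2 aX integrable_continuous_real[OF contD[OF order_refl]] by simp
      have n1: "norm (integral {2..a} fD) \<le> 2 * a powr d"
      proof -
        have "norm (integral {2..a} fD) \<le> 2 * (a powr d - 2 powr d)"
        proof (rule triv_bound[OF _ a2 d0(1) contD[OF order_refl]])
          fix x assume x: "x \<in> {2..a}"
          then have lx: "ln x \<ge> ln 2" "ln x > 0" "ln x \<le> L" using aX by (auto simp: L_def)
          have "1 / ln x \<le> 1 / ln 2" using lx by (intro divide_left_mono) auto
          moreover have "0 < 1 / L" using L0 by simp
          ultimately have b1: "1 / ln x - 1 / L \<le> 2" using ln2i by linarith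
          have b0': "0 \<le> 1 / ln x - 1 / L" using lx L0 by (simp add: frac_le)
          have "norm (fD x) = d * x powr (d - 1) * (1 / ln x - 1 / L)"
            unfolding fD_def \<phi>_def norm_mult norm_of_real norm_e using b0' x d0 by simp
          also have "\<dots> \<le> d * x powr (d - 1) * 2"
            using b1 d0 by (intro mult_left_mono) auto
          finally show "norm (fD x) \<le> 2 * (d * x powr (d - 1))" by simp
        qed auto
        moreover have "(0::real) \<le> 2 powr d" by simp
        ultimately show ?thesis unfolding right_diff_distrib by linarith
      qed
      have n2: "norm (complex_of_real (1 / L) * integral {0..2} fI) \<le> a powr d"
      proof -
        have "norm (complex_of_real (1 / L) * integral {0..2} fI) = (1 / L) * norm (integral {0..2} fI)"
          unfolding norm_mult norm_of_real using L0 by simp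
        also have "\<dots> \<le> 1 * 2 powr d"
          using I2 L2 by (intro mult_mono) auto
        also have "\<dots> \<le> a powr d" using a2 d0 by (simp add: powr_mono2)
        finally show ?thesis .
      qed
      have "norm D \<le> norm (integral {2..a} fD) + norm (integral {a..X} fD)
          + norm (complex_of_real (1 / L) * integral {0..2} fI)"
        unfolding Deq sp2
        by (rule order_trans[OF norm_triangle_ineq4 add_mono[OF norm_triangle_ineq order_refl]])
      also have "\<dots> \<le> 3 * (X powr d / L powr (\<kappa> + 2)) + 4 * A * (min (X powr d) (Y powr d) * ln (real k * L) / L\<^sup>2)"
        using n1 n2 n3 unfolding ad W_def by (simp add: field_simps)
      also have "\<dots> \<le> C * (X powr d / L powr (\<kappa> + 2)) + C * (min (X powr d) (Y powr d) * ln (real k * L) / L\<^sup>2)"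
        using C3 Xd0 L0 Y0 lnkL by (intro add_mono mult_right_mono) auto
      finally show ?thesis by (simp add: distrib_left)
    qed
    show "cmod (calJ c k N \<beta> - complex_of_real (1 / ln (real N powr (1 / real k))) * calI c k N \<beta>)
      \<le> C * (real N powr ((1/c) / real k) / ln (real N powr (1 / real k)) powr (\<kappa> + 2)
             + min (real N powr ((1/c) / real k)) (\<bar>\<beta>\<bar> powr (- (1/c) / real k))
               * ln (ln (real N)) / (ln (real N powr (1 / real k)))\<^sup>2)"
      using main unfolding XP YP lnN D_def by (simp add: X_def L_def)
  qed
qed

end
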